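(* Consider a cathode solution $(\phi_{\mathrm{el}},\phi_{\mathrm{ion}},C)$ with active-layer boundary $h_b\in(h_1,h_2)$ in the classical formulation, i.e. with $\eta=s=\phi_{\mathrm{ion}}-\phi_{\mathrm{el}}-\frac{RT}{4F}\ln\frac{C^{\mathrm{bulk}}}{C}$, and assume $j_{\mathrm{cell}}>0$. Then there exists $\varepsilon>0$ such that $\eta(y)<0$ for all $y\in(h_b-\varepsilon,h_b)$. Consequently the charge-transfer current $i(y)$ is negative on $(h_b-\varepsilon,h_b)$.
   Context: Cathode model (isothermal, 1D). Fix real numbers $0<h_1<h_b<h_2$ and positive constants $\sigma_{\mathrm{el}},\sigma_{\mathrm{ion}}$ (effective electronic/ionic conductivities), $\rho_a$ (air density), $D_2$ (effective diffusion coefficient), $M$ (molar mass of $O_2$), $F$ (Faraday constant), $R$ (gas constant), $T$ (temperature), $A$ (reaction surface area per volume). Also fix $j_{\mathrm{cell}}>0$, $V_2\in\mathbb R$ and $C^{\mathrm{bulk}}\in(0,1)$. Charge-transfer current. For $y\in(h_1,h_b)$ set $$i(y)=A\,K\,\Big(\frac{\rho_a R T\,C(y)}{M}\Big)^{0.2}\Big[\exp\Big(\frac{1.2F\eta(y)}{RT}\Big)-\exp\Big(-\frac{F\eta(y)}{RT}\Big)\Big],\qquad K=1.47\cdot10^{6}\,e^{-85859/(RT)}.$$ Define the signed quantity $$s(y)=\phi_{\mathrm{ion}}(y)-\phi_{\mathrm{el}}(y)-\frac{RT}{4F}\ln\frac{C^{\mathrm{bulk}}}{C(y)}.$$ The activation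 overpotential is $\eta=s$ in the classical formulation and $\eta=|s|$ in the modified formulation. A cathode solution with active-layer boundary $h_b$ is a triple $\phi_{\mathrm{el}},\phi_{\mathrm{ion}},C\in C^1([h_1,h_2])$ with the following properties. - Regularity: each function is $C^2$ on $[h_1,h_b]$ and on $[h_b,h_2]$, and $C>0$. - Equations on $(h_1,h_b)$: $(\sigma_{\mathrm{el}}\phi_{\mathrm{el}}')'=-i$, $(\sigma_{\mathrm{ion}}\phi_{\mathrm{ion}}')'=i$ and $(\rho_aD_2C')'=\frac{M}{4F}i$. - Equations on $(h_b,h_2)$: all three left-hand sides vanish. - Boundary conditions: $-\sigma_{\mathrm{el}}\phi_{\mathrm{el}}'(h_2)=j_{\mathrm{cell}}$, $\phi_{\mathrm{ion}}'(h_2)=0$, $\phi_{\mathrm{el}}(h_2)=V_2$, $C(h_2)=C^{\mathrm{bulk}}$, $\phi_{\mathrm{el}}'(h_1)=0$, $-\sigma_{\mathrm{ion}}\phi_{\mathrm{ion}}'(h_1)=j_{\mathrm{cell}}$, $C'(h_1)=0$. - Interface condition: $s(h_b)=0$, i.e. $\eta(h_b)=0$. *)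

theory Defs
  imports "HOL-Analysis.Analysis"
begin

definition C1_with :: "real set \<Rightarrow> (real \<Rightarrow> real) \<Rightarrow> (real \<Rightarrow> real) \<Rightarrow> bool" where
  "C1_with S f f' \<longleftrightarrow>
     (\<forall>y\<in>S. (f has_real_derivative f' y) (at y within S)) \<and> continuous_on S f'"

definition K_rate :: "real \<Rightarrow> real \<Rightarrow> real" where
  "K_rate R T = 1.47 * 10^6 * exp (- 85859 / (R * T))"

definition ct_current ::
  "real \<Rightarrow> real \<Rightarrow> real \<Rightarrow> real \<Rightarrow> real \<Rightarrow> real \<Rightarrow> real \<Rightarrow> real \<Rightarrow> real" where
  "ct_current A R T F rho_a M c eta =
     A * K_rate R T * ((rho_a * R * T * c / M) powr 0.2) *
     (exp (1.2 * F * eta / (R * T)) - exp (- F * eta / (R * T)))"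

definition s_signed :: "real \<Rightarrow> real \<Rightarrow> real \<Rightarrow> real \<Rightarrow> real \<Rightarrow> real \<Rightarrow> real \<Rightarrow> real" where
  "s_signed R T F Cbulk phi_ion phi_el c = phi_ion - phi_el - R * T / (4 * F) * ln (Cbulk / c)"

end

theory Submission
  imports Defs
begin

theorem mainTheorem2:
  fixes h1 hb h2 sigma_el sigma_ion rho_a D2 M F R T A j_cell V2 C_bulk :: real
    and phi_el phi_ion C :: "real \<Rightarrow> real"
    and phi_el' phi_ion' C' :: "real \<Rightarrow> real"
    and phi_el''a phi_ion''a C''a phi_el''b phi_ion''b C''b :: "real \<Rightarrow> real"
  assumes h: "h1 < hb" "hb < h2"
    and pos: "sigma_el > 0" "sigma_ion > 0" "rho_a > 0" "D2 > 0" "M > 0" "F > 0"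
                "R > 0" "T > 0" "A > 0"
    and jpos: "j_cell > 0"
    and Cb: "0 < C_bulk" "C_bulk < 1"
    (* C^1 on [h1,h2] *)
    and C1: "C1_with {h1..h2} phi_el phi_el'" "C1_with {h1..h2} phi_ion phi_ion'"
            "C1_with {h1..h2} C C'"
    (* C^2 on [h1,hb] *)
    and C2a: "C1_with {h1..hb} phi_el' phi_el''a" "C1_with {h1..hb} phi_ion' phi_ion''a"
             "C1_with {h1..hb} C' C''a"
    (* C^2 on [hb,h2] *)
    and C2b: "C1_with {hb..h2} phi_el' phi_el''b" "C1_with {hb..h2} phi_ion' phi_ion''b"
             "C1_with {hb..h2} C' C''b"
    and Cpos: "\<forall>y\<in>{h1..h2}. C y > 0"
    (* equations in the active layer, classical formulation eta = s *)
    and eq_a: "\<forall>y\<in>{h1<..<hb}.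
       sigma_el * phi_el''a y =
         - ct_current A R T F rho_a M (C y) (s_signed R T F C_bulk (phi_ion y) (phi_el y) (C y))
       \<and> sigma_ion * phi_ion''a y =
         ct_current A R T F rho_a M (C y) (s_signed R T F C_bulk (phi_ion y) (phi_el y) (C y))
       \<and> rho_a * D2 * C''a y =
         M / (4 * F) * ct_current A R T F rho_a M (C y) (s_signed R T F C_bulk (phi_ion y) (phi_el y) (C y))"
    and eq_b: "\<forall>y\<in>{hb<..<h2}.
       sigma_el * phi_el''b y = 0 \<and> sigma_ion * phi_ion''b y = 0 \<and> rho_a * D2 * C''b y = 0"
    and bc: "- sigma_el * phi_el' h2 = j_cell" "phi_ion' h2 = 0" "phi_el h2 = V2"
            "C h2 = C_bulk" "phi_el' h1 = 0" "- sigma_ion * phi_ion' h1 = j_cell" "C' h1 = 0"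
    and interface: "s_signed R T F C_bulk (phi_ion hb) (phi_el hb) (C hb) = 0"
  shows "\<exists>\<epsilon>>0. \<forall>y\<in>{hb - \<epsilon><..<hb}.
           s_signed R T F C_bulk (phi_ion y) (phi_el y) (C y) < 0
         \<and> ct_current A R T F rho_a M (C y) (s_signed R T F C_bulk (phi_ion y) (phi_el y) (C y)) < 0"
proof -
  have sub1: "{h1..hb} \<subseteq> {h1..h2}" "{hb..h2} \<subseteq> {h1..h2}" using h by auto
  have cel: "continuous_on {h1..h2} phi_el'" and cion: "continuous_on {h1..h2} phi_ion'"
    and cC: "continuous_on {h1..h2} C'" using C1 unfolding C1_with_def by auto
  have dion_b: "\<And>x. hb < x \<Longrightarrow> x < h2 \<Longrightarrow> DERIV phi_ion' x :> 0"
  proof -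
    fix x assume x: "hb < x" "x < h2"
    have "(phi_ion' has_real_derivative phi_ion''b x) (at x within {hb..h2})"
      using C2b(2) x unfolding C1_with_def by auto
    hence "(phi_ion' has_real_derivative phi_ion''b x) (at x)" using at_within_Icc_at[OF x] by simp
    moreover have "phi_ion''b x = 0" using eq_b x pos by auto
    ultimately show "DERIV phi_ion' x :> 0" by simp
  qed
  have ion_hb: "phi_ion' hb = 0"
    using DERIV_isconst_end[OF h(2) continuous_on_subset[OF cion sub1(2)] dion_b] bc(2) by simp
  have del_b: "\<And>x. hb < x \<Longrightarrow> x < h2 \<Longrightarrow> DERIV phi_el' x :> 0"
  proof -
    fix x assume x: "hb < x" "x < h2"
    have "(phi_el' has_real_derivative phi_el''b x) (at x within {hb..h2})"
      using C2b(1) x unfolding C1_with_def by auto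
    hence "(phi_el' has_real_derivative phi_el''b x) (at x)" using at_within_Icc_at[OF x] by simp
    moreover have "phi_el''b x = 0" using eq_b x pos by auto
    ultimately show "DERIV phi_el' x :> 0" by simp
  qed
  have el_hb: "phi_el' hb = phi_el' h2"
    using DERIV_isconst_end[OF h(2) continuous_on_subset[OF cel sub1(2)] del_b] by simp
  have el_hb2: "sigma_el * phi_el' hb = - j_cell" using el_hb bc(1) by simp
  define G where "G = (\<lambda>y. sigma_el * phi_el' y + (4 * F / M) * (rho_a * D2) * C' y)"
  have dG: "\<And>x. h1 < x \<Longrightarrow> x < hb \<Longrightarrow> DERIV G x :> 0"
  proof -
    fix x assume x: "h1 < x" "x < hb"
    have a1w: "(phi_el' has_real_derivative phi_el''a x) (at x within {h1..hb})"
      using C2a(1) x unfolding C1_with_def by auto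
    have a1: "(phi_el' has_real_derivative phi_el''a x) (at x)" using a1w at_within_Icc_at[OF x] by simp
    have a2w: "(C' has_real_derivative C''a x) (at x within {h1..hb})"
      using C2a(3) x unfolding C1_with_def by auto
    have a2: "(C' has_real_derivative C''a x) (at x)" using a2w at_within_Icc_at[OF x] by simp
    have "DERIV G x :> sigma_el * phi_el''a x + (4 * F / M) * (rho_a * D2 * C''a x)"
      unfolding G_def using pos by (auto intro!: derivative_eq_intros a1 a2)
    moreover have "sigma_el * phi_el''a x + (4 * F / M) * (rho_a * D2 * C''a x) = 0"
      using eq_a x pos by auto
    ultimately show "DERIV G x :> 0" by simp
  qed
  have cG: "continuous_on {h1..hb} G"
    unfolding G_def using continuous_on_subset[OF cel sub1(1)] continuous_on_subset[OF cC sub1(1)]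
    by (intro continuous_intros) auto
  have "G hb = G h1" using DERIV_isconst_end[OF h(1) cG dG] .
  hence "G hb = 0" using bc unfolding G_def by simp
  hence "(4 * F / M) * (rho_a * D2) * C' hb = j_cell" using el_hb2 unfolding G_def by simp
  moreover have "(4 * F / M) * (rho_a * D2) > 0" using pos by simp
  ultimately have Chb: "C' hb > 0" using jpos zero_less_mult_pos by metis
  have hbin: "h1 < hb" "hb < h2" using h by auto
  have d1w: "(phi_el has_real_derivative phi_el' hb) (at hb within {h1..h2})"
      using C1(1) hbin unfolding C1_with_def by auto
    have d1: "(phi_el has_real_derivative phi_el' hb) (at hb)" using d1w at_within_Icc_at[OF hbin] by simp
  have d2w: "(phi_ion has_real_derivative phi_ion' hb) (at hb within {h1..h2})"
      using C1(2) hbin unfolding C1_with_def by auto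
    have d2: "(phi_ion has_real_derivative phi_ion' hb) (at hb)" using d2w at_within_Icc_at[OF hbin] by simp
  have d3w: "(C has_real_derivative C' hb) (at hb within {h1..h2})"
      using C1(3) hbin unfolding C1_with_def by auto
    have d3: "(C has_real_derivative C' hb) (at hb)" using d3w at_within_Icc_at[OF hbin] by simp
  have Cp: "C hb > 0" using Cpos h by auto
  define S where "S = (\<lambda>y. s_signed R T F C_bulk (phi_ion y) (phi_el y) (C y))"
  define k where "k = R * T / (4 * F)"
  have kpos: "k > 0" unfolding k_def using pos by simp
  have dS: "DERIV S hb :> phi_ion' hb - phi_el' hb - k * ((1 / (C_bulk / C hb)) * (- C_bulk * C' hb / (C hb)^2))"
    unfolding S_def s_signed_def k_def[symmetric]
    using Cp Cb by (auto intro!: derivative_eq_intros d1 d2 d3 simp: power2_eq_square)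
  have "phi_ion' hb - phi_el' hb - k * ((1 / (C_bulk / C hb)) * (- C_bulk * C' hb / (C hb)^2))
      = j_cell / sigma_el + k * (C' hb / C hb)"
    proof -
    have e: "phi_el' hb = - j_cell / sigma_el" using el_hb2 pos by (simp add: field_simps)
    show ?thesis unfolding e ion_hb using pos Cp Cb by (simp add: field_simps power2_eq_square)
  qed
  moreover have "j_cell / sigma_el + k * (C' hb / C hb) > 0"
    using jpos pos kpos Chb Cp by (simp add: add_pos_pos)
  ultimately obtain d where d: "d > 0" "\<forall>hh>0. hh < d \<longrightarrow> S (hb - hh) < S hb"
    using DERIV_pos_inc_left[OF dS] by auto
  have Shb: "S hb = 0" using interface unfolding S_def .
  show ?thesis
  proof (intro exI[of _ "min d (hb - h1)"] conjI ballI)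
    show "min d (hb - h1) > 0" using d h by simp
  next
    fix y assume y: "y \<in> {hb - min d (hb - h1)<..<hb}"
    have Sy: "S y < 0" using d(2)[rule_format, of "hb - y"] y Shb by auto
    thus "s_signed R T F C_bulk (phi_ion y) (phi_el y) (C y) < 0" unfolding S_def .
    have Cy: "C y > 0" using Cpos y h by auto
    define e where "e = S y"
    have "1.2 * F * e / (R * T) < - F * e / (R * T)"
    proof -
      have q: "F * e / (R * T) < 0" using Sy pos unfolding e_def
        by (simp add: divide_neg_pos mult_pos_neg)
      have "1.2 * F * e / (R * T) = 1.2 * (F * e / (R * T))" by simp
      moreover have "- F * e / (R * T) = - (F * e / (R * T))" by simp
      ultimately show ?thesis using q by linarith
    qed
    hence ex: "exp (1.2 * F * e / (R * T)) - exp (- F * e / (R * T)) < 0" by simp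
    have pre: "A * K_rate R T * ((rho_a * R * T * C y / M) powr 0.2) > 0"
      unfolding K_rate_def using pos Cy by simp
    show "ct_current A R T F rho_a M (C y) (s_signed R T F C_bulk (phi_ion y) (phi_el y) (C y)) < 0"
      unfolding ct_current_def using mult_pos_neg[OF pre ex] unfolding e_def S_def by simp
  qed
qed

end
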